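(* Let $\mathcal P$ and $\mathrm{conv}(\mathcal P)$ be as in the context. Let $\mathcal S\subseteq[0,\min\{L-1,T-2,\lfloor(\overline C-\overline V)/V\rfloor\}]_{\mathbb Z}$. For any $t\in[1,T]_{\mathbb Z}$ with $t\ge s+2$ for all $s\in\mathcal S$, the inequality $$x_t\le\overline C y_t-\sum_{s\in\mathcal S}(\overline C-\overline V-sV)(y_{t-s}-y_{t-s-1})$$ is valid and facet-defining for $\mathrm{conv}(\mathcal P)$. For any $t\in[1,T]_{\mathbb Z}$ with $t\le T-s-1$ for all $s\in\mathcal S$, the inequality $$x_t\le\overline C y_t-\sum_{s\in\mathcal S}(\overline C-\overline V-sV)(y_{t+s}-y_{t+s+1})$$ is valid and facet-defining for $\mathrm{conv}(\mathcal P)$.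
   Context: For integers $a,b$, $[a,b]_{\mathbb Z}=\{a,a+1,\dots,b\}$ if $a\le b$ and $\emptyset$ otherwise. Fix a positive integer $T$, positive integers $L$ (minimum up time) and $\ell$ (minimum down time), and reals $\overline C,\underline C,V,\overline V$ with $\overline C>\underline C>0$, $V>0$, $\overline V+V\le\overline C$ and $\underline C<\overline V<\underline C+V$. $\mathcal P$ is the set of $(\mathbf x,\mathbf y)=((x_1,\dots,x_T),(y_1,\dots,y_T))\in\mathbb R_+^T\times\{0,1\}^T$ satisfying: (i) $-y_{t-1}+y_t-y_k\le 0$ for all $t\in[2,T]_{\mathbb Z}$, $k\in[t,\min\{T,t+L-1\}]_{\mathbb Z}$; (ii) $y_{t-1}-y_t+y_k\le 1$ for all $t\in[2,T]_{\mathbb Z}$, $k\in[t,\min\{T,t+\ell-1\}]_{\mathbb Z}$; (iii) $-x_t+\underline C y_t\le 0$ and $x_t-\overline C y_t\le 0$ for all $t\in[1,T]_{\mathbb Z}$; (iv) $x_t-x_{t-1}\le Vy_{t-1}+\overline V(1-y_{t-1})$ for all $t\in[2,T]_{\mathbb Z}$; (v) $x_{t-1}-x_t\le Vy_t+\overline V(1-y_t)$ for all $t\in[2,T]_{\mathbb Z}$. $\mathrm{conv}(\mathcal P)\subseteq\mathbb R^{2T}$ is its convex hull. A linear inequality is valid for $\mathrm{conv}(\mathcal P)$ if all its points satisfy it, and facet-defining if moreover the set of points of $\mathrm{conv}(\mathcal P)$ satisfying it with equality has dimension $\dim\mathrm{conv}(\mathcal P)-1$. *)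

theory Defs
  imports "HOL-Analysis.Analysis" "HOL-Library.Function_Algebras"
begin

text \<open>Pointwise real vector space structure on functions nat => real, so that the
  library notions convex hull, affine hull and affine (in)dependence apply to
  points (x, y) of R^T x R^T, represented as pairs of functions nat => real that
  vanish outside the index range 1..T.\<close>

instantiation "fun" :: (type, real_vector) real_vector
begin
definition scaleR_fun :: "real \<Rightarrow> ('a \<Rightarrow> 'b) \<Rightarrow> 'a \<Rightarrow> 'b"
  where "scaleR_fun r f = (\<lambda>x. r *\<^sub>R f x)"
instance
  by standard (auto simp: scaleR_fun_def fun_eq_iff scaleR_add_right scaleR_add_left)
end

type_synonym point = "(nat \<Rightarrow> real) \<times> (nat \<Rightarrow> real)"

definition pdim :: "point set \<Rightarrow> int" where
  "pdim S = (if S = {} then -1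
     else int (GREATEST n. \<exists>B. B \<subseteq> S \<and> finite B \<and> \<not> affine_dependent B \<and> card B = n) - 1)"

definition Pset :: "nat \<Rightarrow> nat \<Rightarrow> nat \<Rightarrow> real \<Rightarrow> real \<Rightarrow> real \<Rightarrow> real \<Rightarrow> point set" where
  "Pset T L l Cu Cl V Vb = {(x, y).
     (\<forall>t. t \<notin> {1..T} \<longrightarrow> x t = 0 \<and> y t = 0) \<and>
     (\<forall>t\<in>{1..T}. x t \<ge> 0 \<and> (y t = 0 \<or> y t = 1)) \<and>
     (\<forall>t\<in>{2..T}. \<forall>k\<in>{t..min T (t + L - 1)}. - y (t-1) + y t - y k \<le> 0) \<and>
     (\<forall>t\<in>{2..T}. \<forall>k\<in>{t..min T (t + l - 1)}. y (t-1) - y t + y k \<le> 1) \<and>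
     (\<forall>t\<in>{1..T}. - x t + Cl * y t \<le> 0 \<and> x t - Cu * y t \<le> 0) \<and>
     (\<forall>t\<in>{2..T}. x t - x (t-1) \<le> V * y (t-1) + Vb * (1 - y (t-1))) \<and>
     (\<forall>t\<in>{2..T}. x (t-1) - x t \<le> V * y t + Vb * (1 - y t))}"

definition valid_ineq :: "point set \<Rightarrow> (point \<Rightarrow> real) \<Rightarrow> bool" where
  "valid_ineq K g \<longleftrightarrow> (\<forall>p\<in>K. g p \<le> 0)"

definition facet_defining :: "point set \<Rightarrow> (point \<Rightarrow> real) \<Rightarrow> bool" where
  "facet_defining K g \<longleftrightarrow> valid_ineq K g \<and> pdim {p\<in>K. g p = 0} = pdim K - 1"

end

theory Submission
  imports Defs
begin

lemma scaleR_fun_apply [simp]: "(r *\<^sub>R f) x = r *\<^sub>R f x"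
  by (simp add: scaleR_fun_def)

lemma sum_fun_app: "finite A \<Longrightarrow> (\<Sum>a\<in>A. f a) x = (\<Sum>a\<in>A. f a x)"
  for f :: "'a \<Rightarrow> 'b \<Rightarrow> 'c::comm_monoid_add"
  by (induction A rule: finite_induct) auto

definition ex :: "nat \<Rightarrow> point" where "ex k = ((\<lambda>i. if i = k then 1 else 0), (\<lambda>i. 0))"
definition ey :: "nat \<Rightarrow> point" where "ey k = ((\<lambda>i. 0), (\<lambda>i. if i = k then 1 else 0))"
definition Eb :: "nat \<Rightarrow> point set" where "Eb T = ex ` {1..T} \<union> ey ` {1..T}"

definition supp :: "nat \<Rightarrow> point \<Rightarrow> bool" where
  "supp T p \<longleftrightarrow> (\<forall>i. i \<notin> {1..T} \<longrightarrow> fst p i = 0 \<and> snd p i = 0)"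

lemma Eb_finite: "finite (Eb T)" by (simp add: Eb_def)

lemma inj_ex: "inj ex" by (auto simp: inj_def ex_def fun_eq_iff)
lemma inj_ey: "inj ey" by (auto simp: inj_def ey_def fun_eq_iff)

lemma ex_ne_ey: "ex a \<noteq> ey b"
  by (auto simp: ex_def ey_def fun_eq_iff)
lemma ey_ne_ex: "ey a \<noteq> ex b"
  by (auto simp: ex_def ey_def fun_eq_iff)

lemma Eb_card: "card (Eb T) = 2 * T"
proof -
  have "card (ex ` {1..T}) = T" using inj_ex by (simp add: card_image inj_on_def inj_def)
  moreover have "card (ey ` {1..T}) = T" using inj_ey by (simp add: card_image inj_on_def inj_def)
  moreover have "ex ` {1..T} \<inter> ey ` {1..T} = {}" by (auto simp: ex_ne_ey ey_ne_ex)
  ultimately show ?thesis unfolding Eb_def by (simp add: card_Un_disjoint)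
qed

lemma supp_repr:
  assumes "supp T p"
  shows "p = (\<Sum>k\<in>{1..T}. fst p k *\<^sub>R ex k) + (\<Sum>k\<in>{1..T}. snd p k *\<^sub>R ey k)"
proof -
  have f: "(\<Sum>k\<in>{Suc 0..T}. fst p k * (if i = k then 1 else 0)) = fst p i" for i
    using assms unfolding supp_def by (cases "i \<in> {1..T}") (auto simp: if_distrib cong: if_cong)
  have s: "(\<Sum>k\<in>{Suc 0..T}. snd p k * (if i = k then 1 else 0)) = snd p i" for i
    using assms unfolding supp_def by (cases "i \<in> {1..T}") (auto simp: if_distrib cong: if_cong)
  show ?thesis
    by (rule prod_eqI) (simp_all add: fst_sum snd_sum fun_eq_iff sum_fun_app ex_def ey_def f s)
qed

lemma supp_span: "supp T p \<Longrightarrow> p \<in> span (Eb T)"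
  apply (subst supp_repr, assumption)
  apply (intro span_add span_sum span_scale span_base)
  by (auto simp: Eb_def)

lemma supp_span_gen:
  assumes "supp T p" "\<And>k. k \<in> {1..T} \<Longrightarrow> ex k \<in> span X" "\<And>k. k \<in> {1..T} \<Longrightarrow> ey k \<in> span X"
  shows "p \<in> span X"
  apply (subst supp_repr[OF assms(1)])
  apply (intro span_add span_sum span_scale)
  using assms by auto

lemma Eb_indep: "independent (Eb T)"
proof
  assume "dependent (Eb T)"
  then obtain u where u: "\<exists>v\<in>Eb T. u v \<noteq> 0" "(\<Sum>v\<in>Eb T. u v *\<^sub>R v) = 0"
    using dependent_finite[OF Eb_finite] by auto
  have d: "ex ` {1..T} \<inter> ey ` {1..T} = {}" by (auto simp: ex_ne_ey ey_ne_ex)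
  have "u (ex k) = 0" if k: "k \<in> {1..T}" for k
  proof -
    have "0 = fst (\<Sum>v\<in>Eb T. u v *\<^sub>R v) k" using u(2) by simp
    also have "\<dots> = (\<Sum>v\<in>Eb T. u v * fst v k)" by (simp add: fst_sum sum_fun_app Eb_finite)
    also have "\<dots> = (\<Sum>v\<in>ex ` {1..T}. u v * fst v k) + (\<Sum>v\<in>ey ` {1..T}. u v * fst v k)"
      unfolding Eb_def by (rule sum.union_disjoint) (use d in auto)
    also have "(\<Sum>v\<in>ey ` {1..T}. u v * fst v k) = 0" by (rule sum.neutral) (auto simp: ey_def)
    also have "(\<Sum>v\<in>ex ` {1..T}. u v * fst v k) = (\<Sum>j\<in>{1..T}. u (ex j) * fst (ex j) k)"
      by (rule sum.reindex_cong[where l=ex]) (use inj_ex in \<open>auto simp: inj_on_def inj_def\<close>)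
    also have "\<dots> = (\<Sum>j\<in>{1..T}. if j = k then u (ex k) else 0)" by (rule sum.cong) (auto simp: ex_def)
    also have "\<dots> = u (ex k)" using k by simp
    finally show ?thesis by simp
  qed
  moreover have "u (ey k) = 0" if k: "k \<in> {1..T}" for k
  proof -
    have "0 = snd (\<Sum>v\<in>Eb T. u v *\<^sub>R v) k" using u(2) by simp
    also have "\<dots> = (\<Sum>v\<in>Eb T. u v * snd v k)" by (simp add: snd_sum sum_fun_app Eb_finite)
    also have "\<dots> = (\<Sum>v\<in>ex ` {1..T}. u v * snd v k) + (\<Sum>v\<in>ey ` {1..T}. u v * snd v k)"
      unfolding Eb_def by (rule sum.union_disjoint) (use d in auto)
    also have "(\<Sum>v\<in>ex ` {1..T}. u v * snd v k) = 0" by (rule sum.neutral) (auto simp: ex_def)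
    also have "(\<Sum>v\<in>ey ` {1..T}. u v * snd v k) = (\<Sum>j\<in>{1..T}. u (ey j) * snd (ey j) k)"
      by (rule sum.reindex_cong[where l=ey]) (use inj_ey in \<open>auto simp: inj_on_def inj_def\<close>)
    also have "\<dots> = (\<Sum>j\<in>{1..T}. if j = k then u (ey k) else 0)" by (rule sum.cong) (auto simp: ey_def)
    also have "\<dots> = u (ey k)" using k by simp
    finally show ?thesis by simp
  qed
  ultimately show False using u(1) unfolding Eb_def by auto
qed


lemma pdim_eqI:
  assumes "K \<noteq> {}" "B \<subseteq> K" "finite B" "\<not> affine_dependent B" "card B = m"
    "\<And>B. B \<subseteq> K \<Longrightarrow> finite B \<Longrightarrow> \<not> affine_dependent B \<Longrightarrow> card B \<le> m"
  shows "pdim K = int m - 1"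
proof -
  have "(GREATEST n. \<exists>B. B \<subseteq> K \<and> finite B \<and> \<not> affine_dependent B \<and> card B = n) = m"
    by (rule Greatest_equality) (use assms in auto)
  then show ?thesis using assms(1) unfolding pdim_def by simp
qed

lemma aff_indep_diffs:
  assumes "\<not> affine_dependent B" "a \<in> B"
  shows "independent ((\<lambda>x. -a + x) ` (B - {a}))"
  using affine_dependent_iff_dependent2[OF assms(2)] assms(1) by simp

lemma card_diffs: "finite B \<Longrightarrow> a \<in> B \<Longrightarrow> card ((\<lambda>x. -a + x) ` (B - {a})) + 1 = card B"
  for a :: "'a::real_vector"
proof -
  assume "finite B" "a \<in> B"
  have "inj_on (\<lambda>x. -a + x) (B - {a})" by (rule inj_onI) (metis add_left_cancel)
  then have "card ((\<lambda>x. -a + x) ` (B - {a})) = card (B - {a})" by (rule card_image)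
  moreover have "Suc (card (B - {a})) = card B" by (rule card_Suc_Diff1) fact+
  ultimately show ?thesis by simp
qed

lemma aff_card_bound:
  assumes "B \<subseteq> span E" "finite E" "\<not> affine_dependent B" "finite B"
  shows "card B \<le> card E + 1"
proof (cases "B = {}")
  case True then show ?thesis by simp
next
  case False
  then obtain a where a: "a \<in> B" by auto
  let ?D = "(\<lambda>x. -a + x) ` (B - {a})"
  have "?D \<subseteq> span E"
  proof
    fix z assume "z \<in> ?D"
    then obtain x where "x \<in> B" "z = -a + x" by auto
    then show "z \<in> span E" using assms(1) a by (metis span_add span_neg subsetD)
  qed
  then have "card ?D \<le> card E" using independent_span_bound[OF assms(2) aff_indep_diffs[OF assms(3) a]] by auto
  then show ?thesis using card_diffs[OF assms(4) a] by simp
qed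

lemma aff_card_bound_face:
  assumes "B \<subseteq> span E" "finite E" "\<not> affine_dependent B" "finite B" "linear g"
    "\<forall>p\<in>B. g p = 0" "e \<in> span E" "g e \<noteq> 0"
  shows "card B \<le> card E"
proof (cases "B = {}")
  case True then show ?thesis by simp
next
  case False
  then obtain a where a: "a \<in> B" by auto
  define D where "D = (\<lambda>x. -a + x) ` (B - {a})"
  have i: "independent D" unfolding D_def by (rule aff_indep_diffs[OF assms(3) a])
  have DE: "D \<subseteq> span E"
  proof
    fix z assume "z \<in> D"
    then obtain x where "x \<in> B" "z = -a + x" unfolding D_def by auto
    then show "z \<in> span E" using assms(1) a by (metis span_add span_neg subsetD)
  qed
  have g0: "\<And>z. z \<in> D \<Longrightarrow> g z = 0"
  proof -
    fix z assume "z \<in> D"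
    then obtain x where "x \<in> B" "z = -a + x" unfolding D_def by auto
    then show "g z = 0" using assms(6) a linear_diff[OF assms(5)] by simp
  qed
  have ns: "e \<notin> span D"
  proof
    assume "e \<in> span D"
    then have "g e = 0" using linear_eq_0_on_span[OF assms(5)] g0 by blast
    then show False using assms(8) by simp
  qed
  have ii: "independent (insert e D)" by (rule independent_insertI[OF ns i])
  have sE: "insert e D \<subseteq> span E" using DE assms(7) by simp
  have c1: "card (insert e D) \<le> card E" using independent_span_bound[OF assms(2) ii sE] by simp
  have eD: "e \<notin> D" using ns span_base by blast
  have fD: "finite D" using assms(4) unfolding D_def by simp
  have c2: "card (insert e D) = card D + 1" using eD fD by simp
  have c3: "card D + 1 = card B" unfolding D_def by (rule card_diffs[OF assms(4) a])
  show ?thesis using c1 c2 c3 by simp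
qed

lemma aff_lower:
  assumes "0 \<in> K" "A \<subseteq> K" "finite X" "E \<subseteq> span (X \<union> A)" "A \<subseteq> span E"
    "independent E" "finite E" "card X + m \<le> card E"
  shows "\<exists>B\<subseteq>K. finite B \<and> \<not> affine_dependent B \<and> card B = m + 1"
proof -
  obtain Bm where Bm: "Bm \<subseteq> A" "independent Bm" "A \<subseteq> span Bm"
    using maximal_independent_subset[of A] by blast
  have fBm: "finite Bm" using independent_span_bound[OF assms(7) Bm(2)] Bm(1) assms(5) by blast
  have "X \<union> A \<subseteq> span (X \<union> Bm)" using Bm(3) span_mono[of Bm "X \<union> Bm"] span_superset[of "X \<union> Bm"] by blast
  then have "span (X \<union> A) \<subseteq> span (X \<union> Bm)" by (simp add: span_minimal)
  then have "E \<subseteq> span (X \<union> Bm)" using assms(4) by blast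
  then have "card E \<le> card (X \<union> Bm)" using independent_span_bound[OF _ assms(6)] fBm assms(3) by blast
  also have "\<dots> \<le> card X + card Bm" by (rule card_Un_le)
  finally have "m \<le> card Bm" using assms(8) by simp
  then obtain B' where B': "B' \<subseteq> Bm" "card B' = m"
    by (rule obtain_subset_with_card_n)
  have iB': "independent B'" using independent_mono[OF Bm(2) B'(1)] .
  have "0 \<notin> B'" using iB' dependent_zero by blast
  have fB': "finite B'" using B'(1) fBm finite_subset by blast
  have "\<not> affine_dependent (insert 0 B')"
    using affine_dependent_iff_dependent[OF \<open>0 \<notin> B'\<close>] iB' by simp
  moreover have "card (insert 0 B') = m + 1" using fB' \<open>0 \<notin> B'\<close> B'(2) by simp
  moreover have "insert 0 B' \<subseteq> K" using assms(1,2) Bm(1) B'(1) by blast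
  ultimately show ?thesis using fB' by blast
qed

definition ind :: "nat \<Rightarrow> nat \<Rightarrow> nat \<Rightarrow> real" where
  "ind a b i = (if a \<le> i \<and> i \<le> b then 1 else 0)"

locale prm =
  fixes T L l :: nat and Cu Cl V Vb :: real
  assumes T0: "T > 0" and L0: "L > 0" and l0: "l > 0" and CC: "Cu > Cl" and Cl0: "Cl > 0"
    and V0: "V > 0" and VV: "Vb + V \<le> Cu" and ClVb: "Cl < Vb" and VbCl: "Vb < Cl + V"
begin

abbreviation "P \<equiv> Pset T L l Cu Cl V Vb"

definition upx :: "nat \<Rightarrow> nat \<Rightarrow> real" where
  "upx j i = (if j \<le> i \<and> i \<le> T then min Cu (Vb + (real i - real j) * V) else 0)"

definition dnx :: "nat \<Rightarrow> nat \<Rightarrow> real" where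
  "dnx k i = (if 1 \<le> i \<and> i \<le> k then min Cu (Vb + (real k - real i) * V) else 0)"

definition eps :: real where "eps = min V (Cu - Cl)"

definition ax :: "nat \<Rightarrow> nat \<Rightarrow> real" where
  "ax j i = (if i = j then Cu - eps else Cu * ind 1 T i)"

lemma eps_pos: "eps > 0" using V0 CC by (simp add: eps_def)

lemma Up_in: assumes "2 \<le> j" "j \<le> T" shows "(upx j, ind j T) \<in> P"
proof -
  have c1: "\<forall>t. t \<notin> {1..T} \<longrightarrow> upx j t = 0 \<and> ind j T t = 0"
    using assms by (auto simp: upx_def ind_def)
  have c2: "\<forall>t\<in>{1..T}. upx j t \<ge> 0 \<and> (ind j T t = 0 \<or> ind j T t = 1)"
    using assms V0 VV ClVb Cl0 by (auto simp: upx_def ind_def)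
  have c3: "\<forall>t\<in>{2..T}. \<forall>k\<in>{t..min T (t + L - 1)}. - ind j T (t-1) + ind j T t - ind j T k \<le> 0"
    by (auto simp: ind_def)
  have c4: "\<forall>t\<in>{2..T}. \<forall>k\<in>{t..min T (t + l - 1)}. ind j T (t-1) - ind j T t + ind j T k \<le> 1"
    by (auto simp: ind_def)
  have h: "\<And>i. j \<le> i \<Longrightarrow> 0 \<le> (real i - real j) * V" using V0 by simp
  have c5: "\<forall>t\<in>{1..T}. - upx j t + Cl * ind j T t \<le> 0 \<and> upx j t - Cu * ind j T t \<le> 0"
    using assms V0 VV ClVb Cl0 by (auto simp: upx_def ind_def) (smt (verit) h)
  have c6: "\<forall>t\<in>{2..T}. upx j t - upx j (t-1) \<le> V * ind j T (t-1) + Vb * (1 - ind j T (t-1))"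
  proof
    fix t assume t: "t \<in> {2..T}"
    consider "t < j" | "t = j" | "t > j" by linarith
    then show "upx j t - upx j (t-1) \<le> V * ind j T (t-1) + Vb * (1 - ind j T (t-1))"
    proof cases
      case 1 then show ?thesis using t ClVb Cl0 by (auto simp: upx_def ind_def)
    next
      case 2 then show ?thesis using t ClVb Cl0 V0 by (auto simp: upx_def ind_def)
    next
      case 3
      then have "real (t-1) = real t - 1" using t by auto
      then show ?thesis using t 3 V0 by (auto simp: upx_def ind_def min_def algebra_simps)
    qed
  qed
  have c7: "\<forall>t\<in>{2..T}. upx j (t-1) - upx j t \<le> V * ind j T t + Vb * (1 - ind j T t)"
  proof
    fix t assume t: "t \<in> {2..T}"
    consider "t < j" | "t = j" | "t > j" by linarith
    then show "upx j (t-1) - upx j t \<le> V * ind j T t + Vb * (1 - ind j T t)"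
    proof cases
      case 1 then show ?thesis using t ClVb Cl0 by (auto simp: upx_def ind_def)
    next
      case 2 then show ?thesis using t ClVb Cl0 V0 VV by (auto simp: upx_def ind_def)
    next
      case 3
      then have "real (t-1) = real t - 1" using t by auto
      then show ?thesis using t 3 V0 by (auto simp: upx_def ind_def min_def algebra_simps)
    qed
  qed
  show ?thesis unfolding Pset_def using c1 c2 c3 c4 c5 c6 c7 by simp
qed

lemma Dn_in: assumes "1 \<le> k" "k < T" shows "(dnx k, ind 1 k) \<in> P"
proof -
  have c1: "\<forall>t. t \<notin> {1..T} \<longrightarrow> dnx k t = 0 \<and> ind 1 k t = 0"
    using assms by (auto simp: dnx_def ind_def)
  have c2: "\<forall>t\<in>{1..T}. dnx k t \<ge> 0 \<and> (ind 1 k t = 0 \<or> ind 1 k t = 1)"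
    using assms V0 VV ClVb Cl0 by (auto simp: dnx_def ind_def)
  have c3: "\<forall>t\<in>{2..T}. \<forall>k'\<in>{t..min T (t + L - 1)}. - ind 1 k (t-1) + ind 1 k t - ind 1 k k' \<le> 0"
    by (auto simp: ind_def)
  have c4: "\<forall>t\<in>{2..T}. \<forall>k'\<in>{t..min T (t + l - 1)}. ind 1 k (t-1) - ind 1 k t + ind 1 k k' \<le> 1"
    by (auto simp: ind_def)
  have h: "\<And>i. i \<le> k \<Longrightarrow> 0 \<le> (real k - real i) * V" using V0 by simp
  have c5: "\<forall>t\<in>{1..T}. - dnx k t + Cl * ind 1 k t \<le> 0 \<and> dnx k t - Cu * ind 1 k t \<le> 0"
    using assms V0 VV ClVb Cl0 by (auto simp: dnx_def ind_def) (smt (verit) h)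
  have c6: "\<forall>t\<in>{2..T}. dnx k t - dnx k (t-1) \<le> V * ind 1 k (t-1) + Vb * (1 - ind 1 k (t-1))"
  proof
    fix t assume t: "t \<in> {2..T}"
    consider "t \<le> k" | "t = k + 1" | "t > k + 1" by linarith
    then show "dnx k t - dnx k (t-1) \<le> V * ind 1 k (t-1) + Vb * (1 - ind 1 k (t-1))"
    proof cases
      case 1
      then have "real (t-1) = real t - 1" using t by auto
      then show ?thesis using t 1 V0 by (auto simp: dnx_def ind_def min_def algebra_simps)
    next
      case 2 then show ?thesis using t ClVb Cl0 V0 VV by (auto simp: dnx_def ind_def)
    next
      case 3 then show ?thesis using t ClVb Cl0 by (auto simp: dnx_def ind_def)
    qed
  qed
  have c7: "\<forall>t\<in>{2..T}. dnx k (t-1) - dnx k t \<le> V * ind 1 k t + Vb * (1 - ind 1 k t)"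
  proof
    fix t assume t: "t \<in> {2..T}"
    consider "t \<le> k" | "t = k + 1" | "t > k + 1" by linarith
    then show "dnx k (t-1) - dnx k t \<le> V * ind 1 k t + Vb * (1 - ind 1 k t)"
    proof cases
      case 1
      then have "real (t-1) = real t - 1" using t by auto
      then show ?thesis using t 1 V0 by (auto simp: dnx_def ind_def min_def algebra_simps)
    next
      case 2 then show ?thesis using t ClVb Cl0 V0 VV by (auto simp: dnx_def ind_def min_def)
    next
      case 3 then show ?thesis using t ClVb Cl0 by (auto simp: dnx_def ind_def)
    qed
  qed
  show ?thesis unfolding Pset_def using c1 c2 c3 c4 c5 c6 c7 by simp
qed

lemma A_in: "((\<lambda>i. Cu * ind 1 T i), ind 1 T) \<in> P"
  unfolding Pset_def using CC Cl0 V0 by (auto simp: ind_def)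

lemma Aj_in: assumes "j \<in> {1..T}" shows "(ax j, ind 1 T) \<in> P"
proof -
  have e: "eps \<le> V" "eps \<le> Cu - Cl" "eps > 0" using eps_pos by (auto simp: eps_def)
  show ?thesis unfolding Pset_def using CC Cl0 V0 e assms by (auto simp: ind_def ax_def)
qed

lemma zero_in: "(0, 0) \<in> P"
  unfolding Pset_def using V0 Cl0 ClVb by auto

end

lemma finish:
  fixes c D :: "nat \<Rightarrow> real"
  assumes fin: "finite S" and c0: "\<forall>s\<in>S. c s \<ge> 0" and D01: "\<forall>s\<in>S. D s = 1 \<or> D s \<le> 0"
    and uniq: "\<forall>s\<in>S. \<forall>s'\<in>S. D s = 1 \<longrightarrow> D s' = 1 \<longrightarrow> s = s'"
    and y0: "yt = 0 \<Longrightarrow> xt \<le> 0 \<and> (\<forall>s\<in>S. D s \<le> 0)"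
    and y01: "yt = 0 \<or> yt = 1" and y1: "yt = 1 \<Longrightarrow> xt \<le> Cu"
    and y1s: "\<And>s. s \<in> S \<Longrightarrow> yt = 1 \<Longrightarrow> D s = 1 \<Longrightarrow> xt \<le> Cu - c s"
  shows "xt - (Cu * yt - (\<Sum>s\<in>S. c s * D s)) \<le> 0"
proof (cases "yt = 0")
  case True
  then have "(\<Sum>s\<in>S. c s * D s) \<le> 0" using y0 c0 by (intro sum_nonpos) (simp add: mult_nonneg_nonpos)
  then show ?thesis using y0 True by simp
next
  case False
  then have yt: "yt = 1" using y01 by simp
  show ?thesis
  proof (cases "\<exists>s0\<in>S. D s0 = 1")
    case True
    then obtain s0 where s0: "s0 \<in> S" "D s0 = 1" by blast
    have "(\<Sum>s\<in>S. c s * D s) \<le> (\<Sum>s\<in>S. if s = s0 then c s0 else 0)"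
    proof (rule sum_mono)
      fix s assume s: "s \<in> S"
      show "c s * D s \<le> (if s = s0 then c s0 else 0)"
      proof (cases "s = s0")
        case True then show ?thesis using s0 by simp
      next
        case False
        then have "D s \<le> 0" using uniq s s0 D01 by blast
        then show ?thesis using False c0 s by (simp add: mult_nonneg_nonpos)
      qed
    qed
    also have "\<dots> = c s0" using fin s0 by simp
    finally show ?thesis using y1s[OF s0(1) yt s0(2)] yt by simp
  next
    case False
    then have "(\<Sum>s\<in>S. c s * D s) \<le> 0" using D01 c0 by (intro sum_nonpos) (auto simp: mult_nonneg_nonpos)
    then show ?thesis using y1 yt by simp
  qed
qed

context prm begin

lemma P_out: "(x, y) \<in> P \<Longrightarrow> t \<notin> {1..T} \<Longrightarrow> x t = 0 \<and> y t = 0"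
  unfolding Pset_def by auto
lemma P_y01: "(x, y) \<in> P \<Longrightarrow> t \<in> {1..T} \<Longrightarrow> y t = 0 \<or> y t = 1"
  unfolding Pset_def by auto
lemma P_y01': "(x, y) \<in> P \<Longrightarrow> 1 \<le> t \<Longrightarrow> t \<le> T \<Longrightarrow> y t = 0 \<or> y t = 1"
  unfolding Pset_def by auto
lemma P_up': "(x, y) \<in> P \<Longrightarrow> 2 \<le> t \<Longrightarrow> t \<le> T \<Longrightarrow> x t - x (t-1) \<le> V * y (t-1) + Vb * (1 - y (t-1))"
  unfolding Pset_def by auto
lemma P_dn': "(x, y) \<in> P \<Longrightarrow> 2 \<le> t \<Longrightarrow> t \<le> T \<Longrightarrow> x (t-1) - x t \<le> V * y t + Vb * (1 - y t)"
  unfolding Pset_def by auto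
lemma P_xCu': "(x, y) \<in> P \<Longrightarrow> 1 \<le> t \<Longrightarrow> t \<le> T \<Longrightarrow> x t \<le> Cu * y t"
  unfolding Pset_def by auto
lemma P_x0': "(x, y) \<in> P \<Longrightarrow> 1 \<le> t \<Longrightarrow> t \<le> T \<Longrightarrow> x t \<ge> 0"
  unfolding Pset_def by auto
lemma P_x0: "(x, y) \<in> P \<Longrightarrow> t \<in> {1..T} \<Longrightarrow> x t \<ge> 0"
  unfolding Pset_def by auto
lemma P_xCu: "(x, y) \<in> P \<Longrightarrow> t \<in> {1..T} \<Longrightarrow> x t \<le> Cu * y t"
  unfolding Pset_def by auto
lemma P_up: "(x, y) \<in> P \<Longrightarrow> t \<in> {2..T} \<Longrightarrow> x t - x (t-1) \<le> V * y (t-1) + Vb * (1 - y (t-1))"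
  unfolding Pset_def by auto
lemma P_dn: "(x, y) \<in> P \<Longrightarrow> t \<in> {2..T} \<Longrightarrow> x (t-1) - x t \<le> V * y t + Vb * (1 - y t)"
  unfolding Pset_def by auto
lemma P_mu: "(x, y) \<in> P \<Longrightarrow> t \<in> {2..T} \<Longrightarrow> k \<in> {t..min T (t + L - 1)} \<Longrightarrow> - y (t-1) + y t - y k \<le> 0"
  unfolding Pset_def by blast

lemma minup:
  assumes p: "(x, y) \<in> P" and a: "1 \<le> a" "b \<le> c" "c \<le> T" "c \<le> a + L" "y a = 0"
  shows "a < b \<Longrightarrow> y b = 1 \<Longrightarrow> y c = 1"
  using a(2)
proof (induction b)
  case 0 then show ?case by simp
next
  case (Suc b)
  have yb: "y b = 0 \<or> y b = 1" using P_y01[OF p, of b] Suc.prems a by auto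
  show ?case
  proof (cases "y b = 1")
    case True
    then have "a < b" using a(5) Suc.prems by (cases "a = b") auto
    then show ?thesis using Suc True by simp
  next
    case False
    then have yb0: "y b = 0" using yb by simp
    have "- y (Suc b - 1) + y (Suc b) - y c \<le> 0"
      by (rule P_mu[OF p]) (use Suc.prems a in auto)
    then have "y c \<ge> 1" using yb0 Suc.prems by simp
    moreover have "y c = 0 \<or> y c = 1" using P_y01[OF p, of c] Suc.prems a by auto
    ultimately show ?thesis by auto
  qed
qed

lemma Sfacts:
  assumes S: "\<forall>s\<in>S. int s \<le> int L - 1 \<and> int s \<le> int T - 2 \<and> int s \<le> \<lfloor>(Cu - Vb) / V\<rfloor>"
  shows "finite S" "\<forall>s\<in>S. s + 1 \<le> L" "\<forall>s\<in>S. Cu - Vb - real s * V \<ge> 0"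
proof -
  show "finite S" using S by (intro finite_subset[of S "{0..L}"]) auto
  show "\<forall>s\<in>S. s + 1 \<le> L" using S by auto
  show "\<forall>s\<in>S. Cu - Vb - real s * V \<ge> 0"
  proof
    fix s assume "s \<in> S"
    then have "int s \<le> \<lfloor>(Cu - Vb) / V\<rfloor>" using S by auto
    then have "real s \<le> (Cu - Vb) / V" by (simp add: le_floor_iff)
    then show "Cu - Vb - real s * V \<ge> 0" using V0 by (simp add: pos_le_divide_eq)
  qed
qed

lemma valid_bw:
  assumes p: "(x, y) \<in> P" and t: "t \<in> {1..T}" and st: "\<forall>s\<in>S. t \<ge> s + 2"
    and S: "\<forall>s\<in>S. int s \<le> int L - 1 \<and> int s \<le> int T - 2 \<and> int s \<le> \<lfloor>(Cu - Vb) / V\<rfloor>"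
  shows "x t - (Cu * y t - (\<Sum>s\<in>S. (Cu - Vb - real s * V) * (y (t - s) - y (t - s - 1)))) \<le> 0"
proof -
  note SF = Sfacts[OF S]
  define D where "D s = y (t - s) - y (t - s - 1)" for s
  have D01: "\<forall>s\<in>S. D s = 1 \<or> D s \<le> 0"
  proof
    fix s assume s: "s \<in> S"
    have "y (t - s) = 0 \<or> y (t - s) = 1" by (rule P_y01'[OF p, of "t - s"]) (use s st[rule_format, OF s(1)] t in auto)
    moreover have "y (t - s - 1) = 0 \<or> y (t - s - 1) = 1" by (rule P_y01'[OF p, of "t - s - 1"]) (use s st[rule_format, OF s(1)] t in auto)
    ultimately show "D s = 1 \<or> D s \<le> 0" unfolding D_def by auto
  qed
  have Dc: "y c = 1" if s: "s \<in> S" "D s = 1" and c: "t - s \<le> c" "c \<le> t" for s c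
  proof -
    have y1: "y (t - s) = 1" and y0: "y (t - s - 1) = 0"
    proof -
      have "y (t - s) = 0 \<or> y (t - s) = 1" by (rule P_y01'[OF p, of "t - s"]) (use s st[rule_format, OF s(1)] t in auto)
      moreover have "y (t - s - 1) = 0 \<or> y (t - s - 1) = 1" by (rule P_y01'[OF p, of "t - s - 1"]) (use s st[rule_format, OF s(1)] t in auto)
      ultimately show "y (t - s) = 1" "y (t - s - 1) = 0" using s(2) unfolding D_def by auto
    qed
    show ?thesis
    proof (cases "c = t - s")
      case True then show ?thesis using y1 by simp
    next
      case False
      show ?thesis
        by (rule minup[OF p, of "t - s - 1" "t - s" c]) (use s st[rule_format, OF s(1)] t c False SF y0 y1 in auto)
    qed
  qed
  have Dx: "x t \<le> Vb + real s * V" if s: "s \<in> S" "D s = 1" for s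
  proof -
    have y0: "y (t - s - 1) = 0"
    proof -
      have "y (t - s) = 0 \<or> y (t - s) = 1" by (rule P_y01'[OF p, of "t - s"]) (use s st[rule_format, OF s(1)] t in auto)
      moreover have "y (t - s - 1) = 0 \<or> y (t - s - 1) = 1" by (rule P_y01'[OF p, of "t - s - 1"]) (use s st[rule_format, OF s(1)] t in auto)
      ultimately show ?thesis using s(2) unfolding D_def by auto
    qed
    have "i \<le> s \<Longrightarrow> x (t - s + i) \<le> Vb + real i * V" for i
    proof (induction i)
      case 0
      have "x (t - s) - x (t - s - 1) \<le> V * y (t - s - 1) + Vb * (1 - y (t - s - 1))"
        by (rule P_up'[OF p]) (use s st[rule_format, OF s(1)] t in auto)
      moreover have "x (t - s - 1) \<le> Cu * y (t - s - 1)" by (rule P_xCu'[OF p]) (use s st[rule_format, OF s(1)] t in auto)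
      ultimately show ?case using y0 by simp
    next
      case (Suc i)
      have "x (t - s + Suc i) - x (t - s + Suc i - 1) \<le> V * y (t - s + Suc i - 1) + Vb * (1 - y (t - s + Suc i - 1))"
        by (rule P_up'[OF p]) (use Suc.prems s st[rule_format, OF s(1)] t in auto)
      moreover have "y (t - s + Suc i - 1) = 1" by (rule Dc[OF s]) (use Suc.prems s st[rule_format, OF s(1)] t in auto)
      moreover have "t - s + Suc i - 1 = t - s + i" using s st[rule_format, OF s(1)] by auto
      ultimately show ?case using Suc by (simp add: ring_distribs)
    qed
    from this[of s] show ?thesis using s st[rule_format, OF s(1)] by auto
  qed
  have "x t - (Cu * y t - (\<Sum>s\<in>S. (Cu - Vb - real s * V) * D s)) \<le> 0"
  proof (rule finish[OF SF(1) SF(3) D01])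
    show "\<forall>s\<in>S. \<forall>s'\<in>S. D s = 1 \<longrightarrow> D s' = 1 \<longrightarrow> s = s'"
    proof (intro ballI impI)
      fix s s' assume ss: "s \<in> S" "s' \<in> S" "D s = 1" "D s' = 1"
      have "s < s' \<Longrightarrow> False" if "s \<in> S" "s' \<in> S" "D s = 1" "D s' = 1" for s s'
      proof -
        assume "s < s'"
        have "y (t - s - 1) = 1" by (rule Dc[OF that(2,4)]) (use \<open>s < s'\<close> that st[rule_format, OF that(1)] st[rule_format, OF that(2)] t in auto)
        moreover have "y (t - s - 1) = 0"
        proof -
          have "y (t - s) = 0 \<or> y (t - s) = 1" by (rule P_y01'[OF p, of "t - s"]) (use that st[rule_format, OF that(1)] st[rule_format, OF that(2)] t in auto)
          moreover have "y (t - s - 1) = 0 \<or> y (t - s - 1) = 1" by (rule P_y01'[OF p, of "t - s - 1"]) (use that st[rule_format, OF that(1)] st[rule_format, OF that(2)] t in auto)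
          ultimately show ?thesis using that(3) unfolding D_def by auto
        qed
        ultimately show False by simp
      qed
      then show "s = s'" using ss by (metis linorder_neqE_nat)
    qed
    show "y t = 0 \<Longrightarrow> x t \<le> 0 \<and> (\<forall>s\<in>S. D s \<le> 0)"
    proof
      assume "y t = 0"
      then show "x t \<le> 0" using P_xCu[OF p t] by simp
      show "\<forall>s\<in>S. D s \<le> 0"
      proof
        fix s assume s: "s \<in> S"
        show "D s \<le> 0"
        proof (rule ccontr)
          assume "\<not> D s \<le> 0"
          then have "D s = 1" using D01 s by auto
          then have "y t = 1" using Dc[OF s] by auto
          then show False using \<open>y t = 0\<close> by simp
        qed
      qed
    qed
    show "y t = 0 \<or> y t = 1" using P_y01[OF p t] .
    show "y t = 1 \<Longrightarrow> x t \<le> Cu" using P_xCu[OF p t] by simp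
    show "x t \<le> Cu - (Cu - Vb - real s * V)" if "s \<in> S" "y t = 1" "D s = 1" for s
      using Dx[OF that(1,3)] by simp
  qed
  then show ?thesis unfolding D_def .
qed

lemma valid_fw:
  assumes p: "(x, y) \<in> P" and t: "t \<in> {1..T}" and st: "\<forall>s\<in>S. t + s + 1 \<le> T"
    and S: "\<forall>s\<in>S. int s \<le> int L - 1 \<and> int s \<le> int T - 2 \<and> int s \<le> \<lfloor>(Cu - Vb) / V\<rfloor>"
  shows "x t - (Cu * y t - (\<Sum>s\<in>S. (Cu - Vb - real s * V) * (y (t + s) - y (t + s + 1)))) \<le> 0"
proof -
  note SF = Sfacts[OF S]
  define D where "D s = y (t + s) - y (t + s + 1)" for s
  have yv: "y (t + s) = 0 \<or> y (t + s) = 1" "y (t + s + 1) = 0 \<or> y (t + s + 1) = 1" if s: "s \<in> S" for s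
  proof -
    show "y (t + s) = 0 \<or> y (t + s) = 1" by (rule P_y01'[OF p]) (use st[rule_format, OF s] t in auto)
    show "y (t + s + 1) = 0 \<or> y (t + s + 1) = 1" by (rule P_y01'[OF p]) (use st[rule_format, OF s] t in auto)
  qed
  have D01: "\<forall>s\<in>S. D s = 1 \<or> D s \<le> 0"
    using yv unfolding D_def by fastforce
  have D1: "y (t + s) = 1" "y (t + s + 1) = 0" if s: "s \<in> S" "D s = 1" for s
    using yv[OF s(1)] s(2) unfolding D_def by auto
  have yt0: "D s \<le> 0" if s: "s \<in> S" and y0: "y t = 0" for s
  proof (rule ccontr)
    assume "\<not> D s \<le> 0"
    then have Ds: "D s = 1" using D01 s by auto
    have "s \<noteq> 0" using D1[OF s Ds] y0 by (cases "s = 0") auto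
    have "y (t + s + 1) = 1"
      by (rule minup[OF p, of t "t + s" "t + s + 1"]) (use \<open>s \<noteq> 0\<close> t y0 D1[OF s Ds] st[rule_format, OF s] SF(2) s in auto)
    then show False using D1[OF s Ds] by simp
  qed
  have yon: "y c = 1" if s: "s \<in> S" "D s = 1" and yt: "y t = 1" and c: "t \<le> c" "c \<le> t + s" for s c
  proof -
    have yc: "y c = 0 \<or> y c = 1" by (rule P_y01'[OF p]) (use st[rule_format, OF s(1)] t c in auto)
    show ?thesis
    proof (cases "c = t \<or> c = t + s")
      case True then show ?thesis using yt D1[OF s] by auto
    next
      case False
      show ?thesis
      proof (rule ccontr)
        assume "y c \<noteq> 1"
        then have "y c = 0" using yc by simp
        have "y (t + s + 1) = 1"
          by (rule minup[OF p, of c "t + s" "t + s + 1"]) (use False c t \<open>y c = 0\<close> D1[OF s] st[rule_format, OF s(1)] SF(2) s in auto)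
        then show False using D1[OF s] by simp
      qed
    qed
  qed
  have Dx: "x t \<le> Vb + real s * V" if s: "s \<in> S" "D s = 1" and yt: "y t = 1" for s
  proof -
    have "i \<le> s \<Longrightarrow> x (t + s - i) \<le> Vb + real i * V" for i
    proof (induction i)
      case 0
      have "x (t + s + 1 - 1) - x (t + s + 1) \<le> V * y (t + s + 1) + Vb * (1 - y (t + s + 1))"
        by (rule P_dn'[OF p]) (use s st[rule_format, OF s(1)] t in auto)
      moreover have "x (t + s + 1) \<le> Cu * y (t + s + 1)" by (rule P_xCu'[OF p]) (use s st[rule_format, OF s(1)] t in auto)
      ultimately show ?case using D1[OF s] by simp
    next
      case (Suc i)
      have "x (t + s - i - 1) - x (t + s - i) \<le> V * y (t + s - i) + Vb * (1 - y (t + s - i))"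
        by (rule P_dn'[OF p]) (use Suc.prems s st[rule_format, OF s(1)] t in auto)
      moreover have "y (t + s - i) = 1" by (rule yon[OF s yt]) (use Suc.prems in auto)
      moreover have "t + s - i - 1 = t + s - Suc i" by simp
      ultimately show ?case using Suc by (simp add: ring_distribs)
    qed
    from this[of s] show ?thesis by simp
  qed
  have "x t - (Cu * y t - (\<Sum>s\<in>S. (Cu - Vb - real s * V) * D s)) \<le> 0"
  proof (rule finish[OF SF(1) SF(3) D01])
    show "\<forall>s\<in>S. \<forall>s'\<in>S. D s = 1 \<longrightarrow> D s' = 1 \<longrightarrow> s = s'"
    proof (intro ballI impI)
      fix s s' assume ss: "s \<in> S" "s' \<in> S" "D s = 1" "D s' = 1"
      have "s < s' \<Longrightarrow> False" if "s \<in> S" "s' \<in> S" "D s = 1" "D s' = 1" for s s'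
      proof -
        assume "s < s'"
        show False
        proof (cases "s' = s + 1")
          case True
          then show False using D1[OF that(1,3)] D1[OF that(2,4)] by simp
        next
          case False
          have "y (t + s' + 1) = 1"
            by (rule minup[OF p, of "t + s + 1" "t + s'" "t + s' + 1"])
              (use False \<open>s < s'\<close> t D1[OF that(1,3)] D1[OF that(2,4)] st[rule_format, OF that(2)] SF(2) that in auto)
          then show False using D1[OF that(2,4)] by simp
        qed
      qed
      then show "s = s'" using ss by (metis linorder_neqE_nat)
    qed
    show "y t = 0 \<Longrightarrow> x t \<le> 0 \<and> (\<forall>s\<in>S. D s \<le> 0)"
      using P_xCu[OF p t] yt0 by auto
    show "y t = 0 \<or> y t = 1" using P_y01[OF p t] .
    show "y t = 1 \<Longrightarrow> x t \<le> Cu" using P_xCu[OF p t] by simp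
    show "x t \<le> Cu - (Cu - Vb - real s * V)" if "s \<in> S" "y t = 1" "D s = 1" for s
      using Dx[OF that(1,3,2)] by simp
  qed
  then show ?thesis unfolding D_def .
qed

end

lemma convex_le0: "linear g \<Longrightarrow> convex {p. g p \<le> (0::real)}"
  unfolding convex_def
proof (intro allI ballI impI, clarsimp)
  fix x y and u v :: real
  assume g: "linear g" "g x \<le> 0" "g y \<le> 0" "0 \<le> u" "0 \<le> v"
  have "g (u *\<^sub>R x + v *\<^sub>R y) = u * g x + v * g y"
    using linear_add[OF g(1)] linear_scale[OF g(1)] by simp
  also have "\<dots> \<le> 0" using g by (simp add: add_nonpos_nonpos mult_nonneg_nonpos)
  finally show "g (u *\<^sub>R x + v *\<^sub>R y) \<le> 0" .
qed

lemma linear_g: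
  fixes a b :: "nat \<Rightarrow> nat" and c :: "nat \<Rightarrow> real"
  shows "linear (\<lambda>(x :: nat \<Rightarrow> real, y :: nat \<Rightarrow> real). x t - (Cu * y t - (\<Sum>s\<in>S. c s * (y (a s) - y (b s)))))"
proof (rule linearI)
  fix p q :: point
  show "(case p + q of (x, y) \<Rightarrow> x t - (Cu * y t - (\<Sum>s\<in>S. c s * (y (a s) - y (b s))))) =
    (case p of (x, y) \<Rightarrow> x t - (Cu * y t - (\<Sum>s\<in>S. c s * (y (a s) - y (b s))))) +
    (case q of (x, y) \<Rightarrow> x t - (Cu * y t - (\<Sum>s\<in>S. c s * (y (a s) - y (b s)))))"
    by (cases p; cases q) (simp add: ring_distribs sum.distrib sum_subtractf)
next
  fix r :: real and p :: point
  show "(case r *\<^sub>R p of (x, y) \<Rightarrow> x t - (Cu * y t - (\<Sum>s\<in>S. c s * (y (a s) - y (b s))))) =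
    r *\<^sub>R (case p of (x, y) \<Rightarrow> x t - (Cu * y t - (\<Sum>s\<in>S. c s * (y (a s) - y (b s)))))"
    by (cases p) (simp add: ring_distribs sum_distrib_left sum_subtractf mult.left_commute)
qed

context prm begin

lemma supp_P: "p \<in> P \<Longrightarrow> supp T p"
  unfolding supp_def using P_out by (cases p) auto

lemma P_span: "P \<subseteq> span (Eb T)" using supp_P supp_span by blast

lemma K_span: "convex hull P \<subseteq> span (Eb T)"
  by (rule hull_minimal[OF P_span]) (rule subspace_imp_convex[OF subspace_span])

definition Apt :: point where "Apt = ((\<lambda>i. Cu * ind 1 T i), ind 1 T)"

lemma ex_eq: "k \<in> {1..T} \<Longrightarrow> ex k = (1 / eps) *\<^sub>R (Apt - (ax k, ind 1 T))"
  using eps_pos by (auto simp: ex_def Apt_def ax_def ind_def fun_eq_iff)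

lemma ex_span: assumes "k \<in> {1..T}" "Apt \<in> X" "(ax k, ind 1 T) \<in> X" shows "ex k \<in> span X"
  unfolding ex_eq[OF assms(1)] by (intro span_scale span_diff span_base assms(2,3))

lemma Apt_in: "Apt \<in> P" unfolding Apt_def by (rule A_in)

lemma facet_generic:
  assumes lin: "linear g" and valid: "\<forall>p\<in>P. g p \<le> 0" and t: "t \<in> {1..T}" and get: "g (ex t) \<noteq> 0"
    and sp: "Eb T \<subseteq> span ({ex t} \<union> {p\<in>P. g p = 0})"
  shows "facet_defining (convex hull P) g"
proof -
  let ?K = "convex hull P"
  let ?F = "{p\<in>?K. g p = 0}"
  have PK: "P \<subseteq> ?K" by (rule hull_subset)
  have zK: "0 \<in> ?K" using zero_in PK by (auto simp: zero_prod_def)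
  have vK: "valid_ineq ?K g"
  proof -
    have "?K \<subseteq> {p. g p \<le> 0}" by (rule hull_minimal) (use valid convex_le0[OF lin] in auto)
    then show ?thesis unfolding valid_ineq_def by auto
  qed
  have EE: "finite (Eb T)" "independent (Eb T)" "card (Eb T) = 2 * T"
    using Eb_finite Eb_indep Eb_card by auto
  have dK: "pdim ?K = int (2 * T + 1) - 1"
  proof -
    have "\<exists>B\<subseteq>?K. finite B \<and> \<not> affine_dependent B \<and> card B = 2 * T + 1"
    proof (rule aff_lower[OF zK PK, of "{}"])
      have "ex t \<in> span P" by (rule ex_span[OF t Apt_in Aj_in[OF t]])
      then have "{ex t} \<union> {p\<in>P. g p = 0} \<subseteq> span P" using span_superset by blast
      then have "span ({ex t} \<union> {p\<in>P. g p = 0}) \<subseteq> span P" by (simp add: span_minimal)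
      then show "Eb T \<subseteq> span ({} \<union> P)" using sp by auto
    qed (use EE P_span in auto)
    then obtain B where B: "B \<subseteq> ?K" "finite B" "\<not> affine_dependent B" "card B = 2 * T + 1" by blast
    show ?thesis
    proof (rule pdim_eqI[OF _ B])
      show "?K \<noteq> {}" using zK by auto
      fix B' assume "B' \<subseteq> ?K" "finite B'" "\<not> affine_dependent B'"
      then show "card B' \<le> 2 * T + 1" using aff_card_bound[of B' "Eb T"] K_span EE by auto
    qed
  qed
  have dF: "pdim ?F = int (2 * T) - 1"
  proof -
    have zF: "0 \<in> ?F" using zK linear_0[OF lin] by simp
    have AF: "{p\<in>P. g p = 0} \<subseteq> ?F" using PK by auto
    have "\<exists>B\<subseteq>?F. finite B \<and> \<not> affine_dependent B \<and> card B = (2 * T - 1) + 1"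
      by (rule aff_lower[OF zF AF, of "{ex t}"]) (use EE P_span sp t in auto)
    then obtain B where B: "B \<subseteq> ?F" "finite B" "\<not> affine_dependent B" "card B = 2 * T"
      using t by auto
    show ?thesis
    proof (rule pdim_eqI[OF _ B])
      show "?F \<noteq> {}" using zF by blast
      fix B' assume B': "B' \<subseteq> ?F" "finite B'" "\<not> affine_dependent B'"
      have "ex t \<in> span (Eb T)" using t by (auto simp: Eb_def intro: span_base)
      moreover have "B' \<subseteq> span (Eb T)" using B'(1) K_span by auto
      moreover have "\<forall>p\<in>B'. g p = 0" using B'(1) by auto
      ultimately show "card B' \<le> 2 * T"
        using aff_card_bound_face[OF _ EE(1) B'(3) B'(2) lin _ _ get] EE by auto
    qed
  qed
  show ?thesis unfolding facet_defining_def using vK dK dF by simp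
qed

end

lemma sum_single:
  assumes "finite S" "s0 \<in> S" "\<And>s. s \<in> S \<Longrightarrow> f s = (if s = s0 then v else 0)"
  shows "sum f S = v"
proof -
  have "sum f S = (\<Sum>s\<in>S. if s = s0 then v else 0)" by (rule sum.cong) (use assms in auto)
  also have "\<dots> = v" using assms by simp
  finally show ?thesis .
qed

context prm begin

lemma xpart_span:
  assumes "\<forall>k\<in>{1..T}. ex k \<in> span X" "\<forall>i. i \<notin> {1..T} \<longrightarrow> x i = 0"
  shows "(x, 0) \<in> span X"
proof -
  have s: "supp T (x, 0)" using assms(2) by (auto simp: supp_def)
  have e: "(x, 0) = (\<Sum>k\<in>{1..T}. x k *\<^sub>R ex k)" using supp_repr[OF s] by simp
  show ?thesis unfolding e by (intro span_sum span_scale) (use assms(1) in auto)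
qed

lemma ypart_span:
  assumes "(x, y) \<in> span X" "\<forall>k\<in>{1..T}. ex k \<in> span X" "(x, y) \<in> P"
  shows "(0, y) \<in> span X"
proof -
  have "(x, 0) \<in> span X" by (rule xpart_span[OF assms(2)]) (use P_out[OF assms(3)] in auto)
  then have "(x, y) - (x, 0) \<in> span X" using assms(1) by (rule span_diff[rotated])
  then show ?thesis by simp
qed

lemma ey_bw:
  assumes "\<forall>j\<in>{1..Suc T}. (0, ind j T) \<in> span X"
  shows "\<forall>j\<in>{1..T}. ey j \<in> span X"
proof
  fix j assume j: "j \<in> {1..T}"
  have "ey j = (0, ind j T) - (0, ind (Suc j) T)"
    using j by (auto simp: ey_def ind_def fun_eq_iff)
  then show "ey j \<in> span X" using assms j by (metis atLeastAtMost_iff le_SucI Suc_le_mono span_diff)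
qed

lemma ey_fw:
  assumes "\<forall>k\<in>{0..T}. (0, ind 1 k) \<in> span X"
  shows "\<forall>j\<in>{1..T}. ey j \<in> span X"
proof
  fix j assume j: "j \<in> {1..T}"
  have "ey j = (0, ind 1 j) - (0, ind 1 (j - 1))"
    using j by (auto simp: ey_def ind_def fun_eq_iff)
  moreover have "(0, ind 1 j) \<in> span X" "(0, ind 1 (j - 1)) \<in> span X" using assms j by auto
  ultimately show "ey j \<in> span X" by (metis span_diff)
qed

lemma span_bw:
  assumes t: "t \<in> {1..T}" and st: "\<forall>s\<in>S. t \<ge> s + 2"
    and S: "\<forall>s\<in>S. int s \<le> int L - 1 \<and> int s \<le> int T - 2 \<and> int s \<le> \<lfloor>(Cu - Vb) / V\<rfloor>"
    and g_def: "g = (\<lambda>(x, y). x t - (Cu * y t - (\<Sum>s\<in>S. (Cu - Vb - real s * V) * (y (t - s) - y (t - s - 1)))))"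
  shows "Eb T \<subseteq> span ({ex t} \<union> {p\<in>P. g p = 0})"
proof -
  define X where "X = {ex t} \<union> {p\<in>P. g p = 0}"
  note SF = Sfacts[OF S]
  have inX: "p \<in> X" if "p \<in> P" "g p = 0" for p using that unfolding X_def by auto
  have gA: "g Apt = 0"
  proof -
    have "(\<Sum>s\<in>S. (Cu - Vb - real s * V) * (ind 1 T (t - s) - ind 1 T (t - s - 1))) = 0"
    proof (rule sum.neutral, rule ballI)
      fix s assume s: "s \<in> S"
      have "s + 2 \<le> t" using st s by auto
      then show "(Cu - Vb - real s * V) * (ind 1 T (t - s) - ind 1 T (t - s - 1)) = 0"
        using t by (auto simp: ind_def)
    qed
    then show ?thesis using t unfolding g_def Apt_def by (simp add: ind_def)
  qed
  have gAj: "g (ax k, ind 1 T) = 0" if k: "k \<in> {1..T}" "k \<noteq> t" for k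
  proof -
    have "(\<Sum>s\<in>S. (Cu - Vb - real s * V) * (ind 1 T (t - s) - ind 1 T (t - s - 1))) = 0"
    proof (rule sum.neutral, rule ballI)
      fix s assume s: "s \<in> S"
      have "s + 2 \<le> t" using st s by auto
      then show "(Cu - Vb - real s * V) * (ind 1 T (t - s) - ind 1 T (t - s - 1)) = 0"
        using t by (auto simp: ind_def)
    qed
    then show ?thesis using t k unfolding g_def by (simp add: ind_def ax_def)
  qed
  have exs: "\<forall>k\<in>{1..T}. ex k \<in> span X"
  proof
    fix k assume k: "k \<in> {1..T}"
    show "ex k \<in> span X"
    proof (cases "k = t")
      case True then show ?thesis unfolding X_def by (auto intro: span_base)
    next
      case False
      show ?thesis by (rule ex_span[OF k]) (use inX Apt_in gA Aj_in[OF k] gAj[OF k False] in auto)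
    qed
  qed
  have yA: "(0, ind 1 T) \<in> span X"
    by (rule ypart_span[OF _ exs, of "\<lambda>i. Cu * ind 1 T i"]) (use inX Apt_in gA span_base in \<open>auto simp: Apt_def\<close>)
  have yj: "(0, ind j T) \<in> span X" if j: "j \<in> {1..Suc T}" for j
  proof -
    consider "j = Suc T" | "j = 1" | "t < j" "j \<le> T" | "2 \<le> j" "j \<le> t" "t - j \<in> S" | "2 \<le> j" "j \<le> t" "t - j \<notin> S"
      using j t by force
    then show ?thesis
    proof cases
      case 1
      have "(0, ind j T) = (0::point)" using 1 by (simp add: ind_def fun_eq_iff zero_prod_def)
      then show ?thesis by (simp add: span_zero)
    next
      case 2 then show ?thesis using yA by simp
    next
      case 3
      have "g (upx j, ind j T) = 0"
      proof -
        have "(\<Sum>s\<in>S. (Cu - Vb - real s * V) * (ind j T (t - s) - ind j T (t - s - 1))) = 0"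
        proof (rule sum.neutral, rule ballI)
          fix s assume s: "s \<in> S"
          have "s + 2 \<le> t" using st s by auto
          then show "(Cu - Vb - real s * V) * (ind j T (t - s) - ind j T (t - s - 1)) = 0"
            using 3 by (auto simp: ind_def)
        qed
        then show ?thesis using 3 unfolding g_def by (simp add: ind_def upx_def)
      qed
      moreover have "(upx j, ind j T) \<in> P" by (rule Up_in) (use 3 t in auto)
      ultimately show ?thesis using inX span_base by (intro ypart_span[OF _ exs]) auto
    next
      case 4
      have gU: "g (upx j, ind j T) = 0"
      proof -
        have "(\<Sum>s\<in>S. (Cu - Vb - real s * V) * (ind j T (t - s) - ind j T (t - s - 1))) = Cu - Vb - real (t - j) * V"
        proof (rule sum_single[OF SF(1) 4(3)])
          fix s assume s: "s \<in> S"
          have "s + 2 \<le> t" using st s by auto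
          then show "(Cu - Vb - real s * V) * (ind j T (t - s) - ind j T (t - s - 1)) =
            (if s = t - j then Cu - Vb - real (t - j) * V else 0)"
            using 4 t by (auto simp: ind_def)
        qed
        moreover have "upx j t = Vb + real (t - j) * V"
        proof -
          have "Cu - Vb - real (t - j) * V \<ge> 0" using SF(3) 4(3) by blast
          moreover have "real (t - j) = real t - real j" using 4 by simp
          ultimately show ?thesis using 4 t unfolding upx_def by auto
        qed
        ultimately show ?thesis using 4 t unfolding g_def by (simp add: ind_def)
      qed
      have "(upx j, ind j T) \<in> P" by (rule Up_in) (use 4 t in auto)
      then show ?thesis using inX span_base gU by (intro ypart_span[OF _ exs]) auto
    next
      case 5
      have gD: "g (dnx (j - 1), ind 1 (j - 1)) = 0"
      proof -
        have "(\<Sum>s\<in>S. (Cu - Vb - real s * V) * (ind 1 (j - 1) (t - s) - ind 1 (j - 1) (t - s - 1))) = 0"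
        proof (rule sum.neutral, rule ballI)
          fix s assume s: "s \<in> S"
          have "s + 2 \<le> t" using st s by auto
          moreover have "s \<noteq> t - j" using s 5 by auto
          ultimately show "(Cu - Vb - real s * V) * (ind 1 (j - 1) (t - s) - ind 1 (j - 1) (t - s - 1)) = 0"
            using 5 by (auto simp: ind_def)
        qed
        then show ?thesis using 5 unfolding g_def by (simp add: ind_def dnx_def)
      qed
      have "(dnx (j - 1), ind 1 (j - 1)) \<in> P" by (rule Dn_in) (use 5 t in auto)
      then have y1: "(0, ind 1 (j - 1)) \<in> span X" using inX span_base gD by (intro ypart_span[OF _ exs]) auto
      have "((0::nat\<Rightarrow>real), ind j T) = (0, ind 1 T) - (0, ind 1 (j - 1))"
        using 5 t by (auto simp: ind_def fun_eq_iff)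
      moreover have "(0, ind 1 T) - (0, ind 1 (j - 1)) \<in> span X" using y1 yA by (rule span_diff[rotated])
      ultimately show ?thesis by metis
    qed
  qed
  have eys: "\<forall>j\<in>{1..T}. ey j \<in> span X" by (rule ey_bw) (use yj in auto)
  show ?thesis unfolding X_def[symmetric] Eb_def using exs eys by auto
qed

lemma span_fw:
  assumes t: "t \<in> {1..T}" and st: "\<forall>s\<in>S. t + s + 1 \<le> T"
    and S: "\<forall>s\<in>S. int s \<le> int L - 1 \<and> int s \<le> int T - 2 \<and> int s \<le> \<lfloor>(Cu - Vb) / V\<rfloor>"
    and g_def: "g = (\<lambda>(x, y). x t - (Cu * y t - (\<Sum>s\<in>S. (Cu - Vb - real s * V) * (y (t + s) - y (t + s + 1)))))"
  shows "Eb T \<subseteq> span ({ex t} \<union> {p\<in>P. g p = 0})"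
proof -
  define X where "X = {ex t} \<union> {p\<in>P. g p = 0}"
  note SF = Sfacts[OF S]
  have inX: "p \<in> X" if "p \<in> P" "g p = 0" for p using that unfolding X_def by auto
  have sA: "(\<Sum>s\<in>S. (Cu - Vb - real s * V) * (ind 1 T (t + s) - ind 1 T (t + s + 1))) = 0"
  proof (rule sum.neutral, rule ballI)
    fix s assume s: "s \<in> S"
    have "t + s + 1 \<le> T" using st s by auto
    then show "(Cu - Vb - real s * V) * (ind 1 T (t + s) - ind 1 T (t + s + 1)) = 0"
      using t by (auto simp: ind_def)
  qed
  have gA: "g Apt = 0" using t sA unfolding g_def Apt_def by (simp add: ind_def)
  have gAj: "g (ax k, ind 1 T) = 0" if k: "k \<in> {1..T}" "k \<noteq> t" for k
    using t k sA unfolding g_def by (simp add: ind_def ax_def)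
  have exs: "\<forall>k\<in>{1..T}. ex k \<in> span X"
  proof
    fix k assume k: "k \<in> {1..T}"
    show "ex k \<in> span X"
    proof (cases "k = t")
      case True then show ?thesis unfolding X_def by (auto intro: span_base)
    next
      case False
      show ?thesis by (rule ex_span[OF k]) (use inX Apt_in gA Aj_in[OF k] gAj[OF k False] in auto)
    qed
  qed
  have yA: "(0, ind 1 T) \<in> span X"
    by (rule ypart_span[OF _ exs, of "\<lambda>i. Cu * ind 1 T i"]) (use inX Apt_in gA span_base in \<open>auto simp: Apt_def\<close>)
  have yk: "(0, ind 1 k) \<in> span X" if k: "k \<in> {0..T}" for k
  proof -
    consider "k = 0" | "k = T" | "1 \<le> k" "k < t" | "t \<le> k" "k < T" "k - t \<in> S" | "t \<le> k" "k < T" "k - t \<notin> S"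
      using k t by force
    then show ?thesis
    proof cases
      case 1
      have "(0, ind 1 k) = (0::point)" using 1 by (simp add: ind_def fun_eq_iff zero_prod_def)
      then show ?thesis by (simp add: span_zero)
    next
      case 2 then show ?thesis using yA by simp
    next
      case 3
      have "g (dnx k, ind 1 k) = 0"
      proof -
        have "(\<Sum>s\<in>S. (Cu - Vb - real s * V) * (ind 1 k (t + s) - ind 1 k (t + s + 1))) = 0"
        proof (rule sum.neutral, rule ballI)
          fix s assume s: "s \<in> S"
          show "(Cu - Vb - real s * V) * (ind 1 k (t + s) - ind 1 k (t + s + 1)) = 0"
            using 3 by (auto simp: ind_def)
        qed
        then show ?thesis using 3 unfolding g_def by (simp add: ind_def dnx_def)
      qed
      moreover have "(dnx k, ind 1 k) \<in> P" by (rule Dn_in) (use 3 t in auto)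
      ultimately show ?thesis using inX span_base by (intro ypart_span[OF _ exs]) auto
    next
      case 4
      have gD: "g (dnx k, ind 1 k) = 0"
      proof -
        have "(\<Sum>s\<in>S. (Cu - Vb - real s * V) * (ind 1 k (t + s) - ind 1 k (t + s + 1))) = Cu - Vb - real (k - t) * V"
        proof (rule sum_single[OF SF(1) 4(3)])
          fix s assume s: "s \<in> S"
          have "t + s + 1 \<le> T" using st s by auto
          then show "(Cu - Vb - real s * V) * (ind 1 k (t + s) - ind 1 k (t + s + 1)) =
            (if s = k - t then Cu - Vb - real (k - t) * V else 0)"
            using 4 t by (auto simp: ind_def)
        qed
        moreover have "dnx k t = Vb + real (k - t) * V"
        proof -
          have "Cu - Vb - real (k - t) * V \<ge> 0" using SF(3) 4(3) by blast
          moreover have "real (k - t) = real k - real t" using 4 by simp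
          ultimately show ?thesis using 4 t unfolding dnx_def by auto
        qed
        ultimately show ?thesis using 4 t unfolding g_def by (simp add: ind_def)
      qed
      have "(dnx k, ind 1 k) \<in> P" by (rule Dn_in) (use 4 t in auto)
      then show ?thesis using inX span_base gD by (intro ypart_span[OF _ exs]) auto
    next
      case 5
      have gU: "g (upx (k + 1), ind (k + 1) T) = 0"
      proof -
        have "(\<Sum>s\<in>S. (Cu - Vb - real s * V) * (ind (k + 1) T (t + s) - ind (k + 1) T (t + s + 1))) = 0"
        proof (rule sum.neutral, rule ballI)
          fix s assume s: "s \<in> S"
          have "t + s + 1 \<le> T" using st s by auto
          moreover have "s \<noteq> k - t" using s 5 by auto
          ultimately show "(Cu - Vb - real s * V) * (ind (k + 1) T (t + s) - ind (k + 1) T (t + s + 1)) = 0"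
            using 5 by (auto simp: ind_def)
        qed
        then show ?thesis using 5 unfolding g_def by (simp add: ind_def upx_def)
      qed
      have "(upx (k + 1), ind (k + 1) T) \<in> P" by (rule Up_in) (use 5 t in auto)
      then have y1: "(0, ind (k + 1) T) \<in> span X" using inX span_base gU by (intro ypart_span[OF _ exs]) auto
      have "((0::nat\<Rightarrow>real), ind 1 k) = (0, ind 1 T) - (0, ind (k + 1) T)"
        using 5 t by (auto simp: ind_def fun_eq_iff)
      moreover have "(0, ind 1 T) - (0, ind (k + 1) T) \<in> span X" using y1 yA by (rule span_diff[rotated])
      ultimately show ?thesis by metis
    qed
  qed
  have eys: "\<forall>j\<in>{1..T}. ey j \<in> span X" by (rule ey_fw) (use yk in auto)
  show ?thesis unfolding X_def[symmetric] Eb_def using exs eys by auto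
qed

end

theorem proposition1:
  fixes T L l :: nat and Cu Cl V Vb :: real and S :: "nat set"
  assumes "T > 0" "L > 0" "l > 0"
    and "Cu > Cl" "Cl > 0" "V > 0" "Vb + V \<le> Cu" "Cl < Vb" "Vb < Cl + V"
    and S: "\<forall>s\<in>S. int s \<le> int L - 1 \<and> int s \<le> int T - 2 \<and> int s \<le> \<lfloor>(Cu - Vb) / V\<rfloor>"
  shows
    "(\<forall>t\<in>{1..T}. (\<forall>s\<in>S. t \<ge> s + 2) \<longrightarrow>
        facet_defining (convex hull (Pset T L l Cu Cl V Vb))
          (\<lambda>(x, y). x t - (Cu * y t - (\<Sum>s\<in>S. (Cu - Vb - real s * V) * (y (t - s) - y (t - s - 1))))))
     \<and> (\<forall>t\<in>{1..T}. (\<forall>s\<in>S. t + s + 1 \<le> T) \<longrightarrow>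
        facet_defining (convex hull (Pset T L l Cu Cl V Vb))
          (\<lambda>(x, y). x t - (Cu * y t - (\<Sum>s\<in>S. (Cu - Vb - real s * V) * (y (t + s) - y (t + s + 1))))))"
proof -
  interpret prm T L l Cu Cl V Vb by unfold_locales (use assms in auto)
  show ?thesis
  proof (intro conjI ballI impI)
    fix t assume t: "t \<in> {1..T}" and st: "\<forall>s\<in>S. t \<ge> s + 2"
    define g where "g = (\<lambda>(x::nat\<Rightarrow>real, y::nat\<Rightarrow>real). x t - (Cu * y t - (\<Sum>s\<in>S. (Cu - Vb - real s * V) * (y (t - s) - y (t - s - 1)))))"
    have lin: "linear g" unfolding g_def by (rule linear_g)
    have val: "\<forall>p\<in>P. g p \<le> 0"
    proof
      fix p assume p: "p \<in> P"
      obtain x y where xy: "p = (x, y)" by (cases p)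
      show "g p \<le> 0" unfolding g_def xy using valid_bw[OF p[unfolded xy] t st S] by simp
    qed
    have ge: "g (ex t) \<noteq> 0" unfolding g_def ex_def by simp
    have "facet_defining (convex hull P) g"
      by (rule facet_generic[OF lin val t ge span_bw[OF t st S g_def]])
    then show "facet_defining (convex hull (Pset T L l Cu Cl V Vb))
          (\<lambda>(x, y). x t - (Cu * y t - (\<Sum>s\<in>S. (Cu - Vb - real s * V) * (y (t - s) - y (t - s - 1)))))"
      unfolding g_def .
  next
    fix t assume t: "t \<in> {1..T}" and st: "\<forall>s\<in>S. t + s + 1 \<le> T"
    define g where "g = (\<lambda>(x::nat\<Rightarrow>real, y::nat\<Rightarrow>real). x t - (Cu * y t - (\<Sum>s\<in>S. (Cu - Vb - real s * V) * (y (t + s) - y (t + s + 1)))))"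
    have lin: "linear g" unfolding g_def by (rule linear_g)
    have val: "\<forall>p\<in>P. g p \<le> 0"
    proof
      fix p assume p: "p \<in> P"
      obtain x y where xy: "p = (x, y)" by (cases p)
      show "g p \<le> 0" unfolding g_def xy using valid_fw[OF p[unfolded xy] t st S] by simp
    qed
    have ge: "g (ex t) \<noteq> 0" unfolding g_def ex_def by simp
    have "facet_defining (convex hull P) g"
      by (rule facet_generic[OF lin val t ge span_fw[OF t st S g_def]])
    then show "facet_defining (convex hull (Pset T L l Cu Cl V Vb))
          (\<lambda>(x, y). x t - (Cu * y t - (\<Sum>s\<in>S. (Cu - Vb - real s * V) * (y (t + s) - y (t + s + 1)))))"
      unfolding g_def .
  qed
qed

end
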